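(* Let $P$ be an online minimization problem and let $R$ be a randomized algorithm with advice complexity $b(n)$. Suppose there is a function $I:\mathbb{N}\to\mathbb{N}$ such that the number of valid $P$-inputs of length $n$ is at most $I(n)$. Then for every $\varepsilon>0$ there exists a deterministic algorithm with advice $\mathrm{ALG}$ such that $\mathrm{ALG}(\sigma)\leq(1+\varepsilon)\mathbb{E}[R(\sigma)]$ for every input $\sigma$ and such that $\mathrm{ALG}$ reads at most $b(n)+O(\log n+\log\log I(n)+\log\varepsilon^{-1})$ bits of advice on inputs of length $n$. In particular, if $I(n)=2^{n^{O(1)}}$ and $\varepsilon>0$ is a fixed constant, then $\mathrm{ALG}$ reads $b(n)+O(\log n)$ bits of advice.
   Context: Online algorithms with advice read bits from an infinite advice tape prepared by an oracle that knows the whole input; the advice complexity $b(n)$ is the maximum number of bits read on inputs of length at most $n$. Costs are non-negative reals. A randomized algorithm with advice complexity $b(n)$ is a probability distribution over deterministic algorithms with advice complexity at most $b(n)$. *)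

theory Defs
  imports "HOL-Probability.Probability"
begin

text \<open>Requests have type 'r, answers type 'a.
  An online minimization problem is given by a set V of valid inputs and a
  cost function cost, where cost sigma ys is the (non-negative, real) cost of
  answering the input sigma with the answer sequence ys.\<close>

definition online_min_problem :: "'r list set \<Rightarrow> ('r list \<Rightarrow> 'a list \<Rightarrow> real) \<Rightarrow> bool" where
  "online_min_problem V cost \<longleftrightarrow>
     (\<forall>\<sigma>\<in>V. \<forall>ys. length ys = length \<sigma> \<longrightarrow> 0 \<le> cost \<sigma> ys)"

text \<open>A phi rho is the answer the algorithm gives to the last request of the
  prefix rho when the (infinite) advice tape is phi; it only sees the prefix,
  so the algorithm is online.  O sigma is the advice tape written by the
  oracle, which knows the whole input sigma.\<close>

type_synonym ('r, 'a) det_alg = "((nat \<Rightarrow> bool) \<Rightarrow> 'r list \<Rightarrow> 'a) \<times> ('r list \<Rightarrow> (nat \<Rightarrow> bool))"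

definition run :: "((nat \<Rightarrow> bool) \<Rightarrow> 'r list \<Rightarrow> 'a) \<Rightarrow> (nat \<Rightarrow> bool) \<Rightarrow> 'r list \<Rightarrow> 'a list" where
  "run A \<phi> \<sigma> = map (\<lambda>i. A \<phi> (take (Suc i) \<sigma>)) [0..<length \<sigma>]"

definition alg_output :: "('r, 'a) det_alg \<Rightarrow> 'r list \<Rightarrow> 'a list" where
  "alg_output D \<sigma> = run (fst D) (snd D \<sigma>) \<sigma>"

definition alg_cost :: "('r list \<Rightarrow> 'a list \<Rightarrow> real) \<Rightarrow> ('r, 'a) det_alg \<Rightarrow> 'r list \<Rightarrow> real" where
  "alg_cost cost D \<sigma> = cost \<sigma> (alg_output D \<sigma>)"

text \<open>D reads at most k bits of advice on input sigma: its behaviour on sigma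
  is determined by the first floor(k) bits of the oracle's tape (bits
  0, ..., floor(k)-1), i.e. any tape agreeing with the oracle's tape on those
  positions yields the same answers.\<close>

definition reads_at_most :: "('r, 'a) det_alg \<Rightarrow> 'r list \<Rightarrow> real \<Rightarrow> bool" where
  "reads_at_most D \<sigma> k \<longleftrightarrow>
     (\<forall>\<psi>. (\<forall>i. real (Suc i) \<le> k \<longrightarrow> \<psi> i = snd D \<sigma> i) \<longrightarrow> run (fst D) \<psi> \<sigma> = alg_output D \<sigma>)"

definition advice_complexity_le :: "'r list set \<Rightarrow> ('r, 'a) det_alg \<Rightarrow> (nat \<Rightarrow> real) \<Rightarrow> bool" where
  "advice_complexity_le V D b \<longleftrightarrow> (\<forall>\<sigma>\<in>V. \<forall>n. length \<sigma> \<le> n \<longrightarrow> reads_at_most D \<sigma> (b n))"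

definition rand_alg_with_advice :: "'r list set \<Rightarrow> ('r, 'a) det_alg measure \<Rightarrow> (nat \<Rightarrow> nat) \<Rightarrow> bool" where
  "rand_alg_with_advice V M b \<longleftrightarrow>
     prob_space M \<and> (\<forall>D\<in>space M. advice_complexity_le V D (\<lambda>n. real (b n)))"

definition expected_cost :: "('r list \<Rightarrow> 'a list \<Rightarrow> real) \<Rightarrow> ('r, 'a) det_alg measure \<Rightarrow> 'r list \<Rightarrow> ennreal" where
  "expected_cost cost M \<sigma> = (\<integral>\<^sup>+ D. ennreal (alg_cost cost D \<sigma>) \<partial>M)"

definition inputs_bounded_by :: "'r list set \<Rightarrow> (nat \<Rightarrow> nat) \<Rightarrow> bool" where
  "inputs_bounded_by V I \<longleftrightarrow>
     (\<forall>n. finite {\<sigma>\<in>V. length \<sigma> = n} \<and> card {\<sigma>\<in>V. length \<sigma> = n} \<le> I n)"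

end

theory Submission
  imports Defs
begin


lemma bits_sum: "(\<Sum>i<L. if odd ((x::nat) div 2^i) then (2::nat)^i else 0) = x mod 2^L"
proof (induction L)
  case 0 then show ?case by simp
next
  case (Suc L)
  have "x mod 2^(Suc L) = 2^L * (x div 2^L mod 2) + x mod 2^L"
    using mod_mult2_eq[of x "2^L" 2] by (simp only: power_Suc2)
  also have "2^L * (x div 2^L mod 2) = (if odd (x div 2^L) then 2^L else 0)"
    by (simp add: mod2_eq_if)
  finally show ?case using Suc by simp
qed

definition blk :: "nat \<Rightarrow> nat \<Rightarrow> nat \<Rightarrow> bool" where
  "blk x L r = (if r < 2*L then (if even r then True else odd (x div 2^(r div 2))) else False)"

definition dL :: "(nat \<Rightarrow> bool) \<Rightarrow> nat \<Rightarrow> nat" where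
  "dL \<phi> s = (LEAST i. \<not> \<phi> (s + 2*i))"

definition dV :: "(nat \<Rightarrow> bool) \<Rightarrow> nat \<Rightarrow> nat \<Rightarrow> nat" where
  "dV \<phi> s L = (\<Sum>i<L. if \<phi> (s + 2*i + 1) then 2^i else 0)"

lemma decode_blk:
  assumes agree: "\<And>r. r \<le> 2*L \<Longrightarrow> \<phi> (s + r) = blk x L r" and x: "x < 2^L"
  shows "dL \<phi> s = L" "dV \<phi> s L = x"
proof -
  have t: "\<phi> (s + 2*i)" if "i < L" for i using agree[of "2*i"] that by (simp add: blk_def)
  have f: "\<not> \<phi> (s + 2*L)" using agree[of "2*L"] by (simp add: blk_def)
  show "dL \<phi> s = L" unfolding dL_def
  proof (rule Least_equality)
    show "\<not> \<phi> (s + 2*L)" by (rule f)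
    fix y assume "\<not> \<phi> (s + 2*y)"
    then show "L \<le> y" using t by (meson not_less)
  qed
  have "dV \<phi> s L = (\<Sum>i<L. if odd (x div 2^i) then (2::nat)^i else 0)"
    unfolding dV_def
  proof (rule sum.cong)
    fix i assume "i \<in> {..<L}"
    then have "\<phi> (s + (2*i+1)) = blk x L (2*i+1)" by (intro agree) auto
    then show "(if \<phi> (s + 2*i + 1) then 2^i else 0) = (if odd (x div 2^i) then (2::nat)^i else 0)"
      using \<open>i \<in> {..<L}\<close> by (simp add: blk_def add.assoc)
  qed simp
  also have "\<dots> = x" using bits_sum x by simp
  finally show "dV \<phi> s L = x" .
qed

definition tape :: "nat \<Rightarrow> nat \<Rightarrow> nat \<Rightarrow> nat \<Rightarrow> (nat \<Rightarrow> bool) \<Rightarrow> nat \<Rightarrow> bool" where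
  "tape n L1 j L2 adv i =
     (if i < 2*L1+1 then blk n L1 i
      else if i < 2*L1+2*L2+2 then blk j L2 (i - (2*L1+1))
      else adv (i - (2*L1+2*L2+2)))"

definition dN :: "(nat \<Rightarrow> bool) \<Rightarrow> nat" where "dN \<phi> = dV \<phi> 0 (dL \<phi> 0)"
definition dS :: "(nat \<Rightarrow> bool) \<Rightarrow> nat" where "dS \<phi> = 2 * dL \<phi> 0 + 1"
definition dJ :: "(nat \<Rightarrow> bool) \<Rightarrow> nat" where "dJ \<phi> = dV \<phi> (dS \<phi>) (dL \<phi> (dS \<phi>))"
definition dH :: "(nat \<Rightarrow> bool) \<Rightarrow> nat" where "dH \<phi> = dS \<phi> + 2 * dL \<phi> (dS \<phi>) + 1"

lemma decode_tape:
  assumes agree: "\<And>i. i < 2*L1+2*L2+2 \<Longrightarrow> \<psi> i = tape n L1 j L2 adv i"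
    and n: "n < 2^L1" and j: "j < 2^L2"
  shows "dN \<psi> = n" "dJ \<psi> = j" "dH \<psi> = 2*L1+2*L2+2"
proof -
  have a1: "\<psi> (0 + r) = blk n L1 r" if "r \<le> 2*L1" for r
    using agree[of r] that by (simp add: tape_def)
  have l1: "dL \<psi> 0 = L1" and v1: "dV \<psi> 0 L1 = n" using decode_blk[OF a1 n] by auto
  have s: "dS \<psi> = 2*L1+1" using l1 by (simp add: dS_def)
  have a2: "\<psi> ((2*L1+1) + r) = blk j L2 r" if "r \<le> 2*L2" for r
    using agree[of "2*L1+1+r"] that by (simp add: tape_def)
  have l2: "dL \<psi> (2*L1+1) = L2" and v2: "dV \<psi> (2*L1+1) L2 = j" using decode_blk[OF a2 j] by auto
  show "dN \<psi> = n" using l1 v1 by (simp add: dN_def)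
  show "dJ \<psi> = j" using s l2 v2 by (simp add: dJ_def)
  show "dH \<psi> = 2*L1+2*L2+2" using s l2 by (simp add: dH_def)
qed

lemma tape_shift: "tape n L1 j L2 adv (2*L1+2*L2+2 + i) = adv i"
  by (simp add: tape_def)






lemma ar1: assumes "(1+\<epsilon>)*r*m \<le> (r::real)" "0 < r" "0 < \<epsilon>" shows "m \<le> 1/(1+\<epsilon>)"
proof -
  have "r * ((1+\<epsilon>)*m) \<le> r * 1" using assms(1) by (simp add: algebra_simps)
  then have "(1+\<epsilon>)*m \<le> 1" using assms(2) by simp
  then show ?thesis using assms(3) by (subst pos_le_divide_eq) (auto simp: mult.commute)
qed
lemma ar2: "\<lbrakk>a = 1 - b; b \<le> 1/(1+\<epsilon>); e = 1 - 1/(1+\<epsilon>)\<rbrakk> \<Longrightarrow> e \<le> (a::real)"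
  by linarith
lemma ar3: assumes "0 < p * real (card T)" shows "real (nat \<lceil>p * real (card T)\<rceil> - 1) < p * real (card T)"
  using assms by (simp add: of_nat_diff) linarith

lemma eps_frac: "(\<epsilon>::real) > 0 \<Longrightarrow> \<epsilon>/(1+\<epsilon>) = 1 - 1/(1+\<epsilon>)"
  by (simp add: field_simps)

lemma good_prob:
  assumes P: "prob_space M" and f: "f \<in> borel_measurable M" and e: "0 < (\<epsilon>::real)"
  defines "G \<equiv> {x\<in>space M. ennreal (f x) \<le> ennreal (1+\<epsilon>) * (\<integral>\<^sup>+x. ennreal (f x) \<partial>M)}"
  shows "G \<in> sets M" "\<epsilon>/(1+\<epsilon>) \<le> measure M G"
proof -
  interpret prob_space M by (rule P)
  define E where "E = (\<integral>\<^sup>+x. ennreal (f x) \<partial>M)"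
  define B where "B = {x\<in>space M. ennreal (1+\<epsilon>) * E < ennreal (f x)}"
  have fm: "(\<lambda>x. ennreal (f x)) \<in> borel_measurable M" using f by measurable
  show Gs: "G \<in> sets M" unfolding G_def using fm by measurable
  have Bs: "B \<in> sets M" unfolding B_def using fm by measurable
  have GB: "G = space M - B" unfolding G_def B_def E_def by (auto simp: not_less)
  have pB: "measure M B \<le> 1/(1+\<epsilon>)"
  proof (cases "E = \<infinity>")
    case True
    have "ennreal (1+\<epsilon>) \<noteq> 0" using e by simp
    then have "ennreal (1+\<epsilon>) * E = \<infinity>" using True by (simp add: ennreal_mult_eq_top_iff)
    then have "B = {}" unfolding B_def by auto
    then show ?thesis using e by simp
  next
    case False
    show ?thesis
    proof (cases "E = 0")
      case True
      then have A0: "AE x in M. ennreal (f x) = 0" using fm nn_integral_0_iff_AE E_def by metis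
      have nb: "x \<notin> B" if "ennreal (f x) = 0" for x
      proof
        assume "x \<in> B"
        then have "ennreal (1+\<epsilon>) * E < ennreal (f x)" unfolding B_def by blast
        then show False using that by simp
      qed
      have "AE x in M. x \<notin> B" using A0 by (rule AE_mp) (rule AE_I2, use nb in blast)
      moreover have "{x\<in>space M. \<not> x \<notin> B} = B" using sets.sets_into_space[OF Bs] by auto
      ultimately have "emeasure M B = 0" using AE_iff_measurable[OF Bs, of "\<lambda>x. x \<notin> B"] by auto
      then have "measure M B = 0" by (simp add: measure_def)
      then show ?thesis using e by simp
    next
      case E0: False
      obtain r where Er: "E = ennreal r" and r00: "0 \<le> r" using False by (cases E rule: ennreal_cases) auto
      have r0: "0 < r" using E0 Er r00 by (cases "r = 0") auto
      define c where "c = ennreal (1+\<epsilon>) * E"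
      have c_eq: "c = ennreal ((1+\<epsilon>)*r)" unfolding c_def Er using e r00 by (simp add: ennreal_mult)
      have "c * emeasure M B = (\<integral>\<^sup>+x. c * indicator B x \<partial>M)"
        by (rule nn_integral_cmult_indicator[OF Bs, symmetric])
      also have "\<dots> \<le> E" unfolding E_def
      proof (rule nn_integral_mono)
        fix x assume "x \<in> space M"
        show "c * indicator B x \<le> ennreal (f x)"
        proof (cases "x \<in> B")
          case True
          then have "c < ennreal (f x)" unfolding B_def c_def by blast
          then show ?thesis using True by (simp add: less_imp_le)
        qed simp
      qed
      finally have cE: "c * emeasure M B \<le> E" .
      have "ennreal ((1+\<epsilon>)*r * measure M B) = c * emeasure M B"
        unfolding c_eq emeasure_eq_measure using e r00 by (subst ennreal_mult) auto
      with cE have "ennreal ((1+\<epsilon>)*r * measure M B) \<le> ennreal r" by (simp add: Er)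
      then have "(1+\<epsilon>)*r * measure M B \<le> r" by (subst (asm) ennreal_le_iff[OF r00])
      then show ?thesis using r0 e by (rule ar1)
    qed
  qed
  have mG: "measure M G = 1 - measure M B" unfolding GB by (rule prob_compl[OF Bs])
  have "\<epsilon>/(1+\<epsilon>) = 1 - 1/(1+\<epsilon>)" by (rule eps_frac[OF e])
  then show "\<epsilon>/(1+\<epsilon>) \<le> measure M G" using ar2[OF mG pB] by blast
qed

lemma exists_heavy:
  assumes P: "prob_space M" and fin: "finite T" and ne: "T \<noteq> {}"
    and G: "\<And>s. s \<in> T \<Longrightarrow> G s \<in> sets M \<and> p \<le> measure M (G s)" and p: "0 < p"
  shows "\<exists>D\<in>space M. p * real (card T) \<le> real (card {s\<in>T. D \<in> G s})"
proof (rule ccontr)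
  interpret prob_space M by (rule P)
  assume "\<not> ?thesis"
  then have lt: "\<And>D. D \<in> space M \<Longrightarrow> real (card {s\<in>T. D \<in> G s}) < p * real (card T)" by (auto simp: not_le)
  define c where "c = nat \<lceil>p * real (card T)\<rceil> - 1"
  have cpos: "0 < p * real (card T)" using p ne fin by (simp add: card_gt_0_iff)
  have cl: "real c < p * real (card T)" unfolding c_def using cpos by (rule ar3)
  have le: "real (card {s\<in>T. D \<in> G s}) \<le> real c" if "D \<in> space M" for D
  proof -
    have "int (card {s\<in>T. D \<in> G s}) < \<lceil>p * real (card T)\<rceil>" using lt[OF that]
      by (simp add: less_ceiling_iff)
    then show ?thesis unfolding c_def by linarith
  qed
  have sumeq: "(\<Sum>s\<in>T. indicator (G s) D) = real (card {s\<in>T. D \<in> G s})" for D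
  proof -
    have "(\<Sum>s\<in>T. indicator (G s) D :: real) = (\<Sum>s\<in>T. if D \<in> G s then 1 else 0)"
      by (intro sum.cong) (auto simp: indicator_def)
    also have "\<dots> = (\<Sum>s\<in>{s\<in>T. D \<in> G s}. 1)" using sum.inter_filter[OF fin, of "\<lambda>_. 1::real"] by simp
    finally show ?thesis by simp
  qed
  have integ: "integrable M (indicator (G s) :: _ \<Rightarrow> real)" if "s \<in> T" for s
    using G[OF that] emeasure_finite[of "G s"] by (intro integrable_real_indicator) (auto simp: less_top[symmetric])
  have "(\<integral>D. (\<Sum>s\<in>T. indicator (G s) D) \<partial>M) = (\<Sum>s\<in>T. measure M (G s))"
  proof -
    have "(\<integral>D. (\<Sum>s\<in>T. indicator (G s) D) \<partial>M) = (\<Sum>s\<in>T. (\<integral>D. indicator (G s) D \<partial>M) :: real)"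
      by (rule Bochner_Integration.integral_sum) (rule integ)
    also have "\<dots> = (\<Sum>s\<in>T. measure M (G s))"
      using G emeasure_finite by (intro sum.cong refl integral_indicator) auto
    finally show ?thesis .
  qed
  also have "\<dots> \<ge> (\<Sum>s\<in>T. p)" using G by (intro sum_mono) blast
  finally have ge0: "(\<Sum>s\<in>T. p) \<le> (\<integral>D. (\<Sum>s\<in>T. indicator (G s) D) \<partial>M)" .
  have "(\<Sum>s\<in>T. p) = p * real (card T)" by (simp add: mult.commute)
  with ge0 have ge: "p * real (card T) \<le> (\<integral>D. (\<Sum>s\<in>T. indicator (G s) D) \<partial>M)" by (simp add: mult.commute)
  have i1: "integrable M (\<lambda>D. \<Sum>s\<in>T. indicator (G s) D :: real)"
    by (rule Bochner_Integration.integrable_sum) (rule integ)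
  have "(\<integral>D. (\<Sum>s\<in>T. indicator (G s) D) \<partial>M) \<le> (\<integral>D. real c \<partial>M)"
  proof (rule integral_mono[OF i1 integrable_const])
    fix D assume "D \<in> space M"
    then show "(\<Sum>s\<in>T. indicator (G s) D) \<le> real c" unfolding sumeq by (rule le)
  qed
  also have "\<dots> = real c" by (simp add: prob_space.prob_space[OF P])
  finally show False using ge cl by linarith
qed

lemma cover:
  assumes P: "prob_space M" and fin: "finite S"
    and G: "\<And>s. s \<in> S \<Longrightarrow> G s \<in> sets M \<and> p \<le> measure M (G s)" and p: "0 < p" "p \<le> 1"
  shows "T \<subseteq> S \<Longrightarrow> (1-p)^h * real (card T) < 1 \<Longrightarrow>
     \<exists>ds. set ds \<subseteq> space M \<and> length ds \<le> h \<and> (\<forall>s\<in>T. \<exists>D\<in>set ds. D \<in> G s)"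
proof (induction h arbitrary: T)
  case 0
  then have "card T = 0" by simp
  moreover have "finite T" using 0 fin finite_subset by blast
  ultimately have "T = {}" by simp
  then show ?case by auto
next
  case (Suc h)
  show ?case
  proof (cases "T = {}")
    case True then show ?thesis by (intro exI[of _ "[]"]) auto
  next
    case False
    have finT: "finite T" using Suc.prems fin finite_subset by blast
    obtain D where D: "D \<in> space M" and h: "p * real (card T) \<le> real (card {s\<in>T. D \<in> G s})"
      using exists_heavy[OF P finT False, of G p] G Suc.prems p by blast
    define T' where "T' = {s\<in>T. D \<notin> G s}"
    have "card T = card {s\<in>T. D \<in> G s} + card T'"
    proof -
      have "T = {s\<in>T. D \<in> G s} \<union> T'" "{s\<in>T. D \<in> G s} \<inter> T' = {}" unfolding T'_def by auto
      then show ?thesis using finT card_Un_disjoint[of "{s\<in>T. D \<in> G s}" T'] unfolding T'_def by auto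
    qed
    then have cT': "real (card T') \<le> (1-p) * real (card T)" using h by (simp add: algebra_simps)
    have "(1-p)^h * real (card T') \<le> (1-p)^h * ((1-p) * real (card T))"
      using cT' p by (intro mult_left_mono) auto
    also have "\<dots> < 1" using Suc.prems by (simp add: mult.left_commute)
    finally obtain ds where ds: "set ds \<subseteq> space M" "length ds \<le> h" "\<forall>s\<in>T'. \<exists>D\<in>set ds. D \<in> G s"
      using Suc.IH[of T'] Suc.prems unfolding T'_def by auto
    show ?thesis using ds D unfolding T'_def by (intro exI[of _ "D # ds"]) auto
  qed
qed




lemma nat_ceil_le: "0 \<le> x \<Longrightarrow> real (nat \<lceil>x\<rceil>) \<le> x + 1"
  using of_int_ceiling_le_add_one[of x] by (simp add: of_nat_nat)

lemma le_nat_ceil: "x \<le> real (nat \<lceil>x\<rceil>)"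
  by (rule real_nat_ceiling_ge)

lemma pow_ceil: assumes "1 \<le> (y::real)" shows "y \<le> 2 ^ nat \<lceil>log 2 y\<rceil>"
proof -
  have "y = 2 powr (log 2 y)" using assms by simp
  also have "\<dots> \<le> 2 powr real (nat \<lceil>log 2 y\<rceil>)" by (rule powr_mono) (auto intro: le_nat_ceil)
  also have "\<dots> = 2 ^ nat \<lceil>log 2 y\<rceil>" by (rule powr_realpow) simp
  finally show ?thesis .
qed

lemma log_le: "0 < (x::real) \<Longrightarrow> x \<le> y \<Longrightarrow> log 2 x \<le> log 2 y"
  by (subst log_le_cancel_iff) auto

lemma log2_ge1: "2 \<le> (y::real) \<Longrightarrow> 1 \<le> log 2 y"
  by simp

lemma budget:
  fixes n I :: nat and \<epsilon> :: real
  assumes e: "0 < \<epsilon>"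
  defines "q \<equiv> nat \<lceil>1/\<epsilon>\<rceil>" and "t \<equiv> nat \<lceil>log 2 (real I + 2)\<rceil>"
  shows "real (2 * nat \<lceil>log 2 (real n + 2)\<rceil> + 2 * nat \<lceil>log 2 (real (q*t) + 1)\<rceil> + 2)
     \<le> 12 * (log 2 (real n + 2) + log 2 (log 2 (real I + 2)) + log 2 (1/\<epsilon> + 2))"
proof -
  define a where "a = log 2 (real n + 2)"
  define d where "d = log 2 (log 2 (real I + 2))"
  define c where "c = log 2 (1/\<epsilon> + 2)"
  define LI where "LI = log 2 (real I + 2)"
  have a1: "1 \<le> a" unfolding a_def by simp
  have LI1: "1 \<le> LI" unfolding LI_def by simp
  have d0: "0 \<le> d" unfolding d_def LI_def[symmetric] using LI1 by simp
  have c1: "1 \<le> c" unfolding c_def by (rule log2_ge1) (use e in simp)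
  have ep: "0 < 1/\<epsilon>" using e by simp
  have "0 < real q" using le_nat_ceil[of "1/\<epsilon>"] ep unfolding q_def by linarith
  then have "q \<noteq> 0" by auto
  then have q1: "1 \<le> real q" by simp
  have qle: "real q \<le> 1/\<epsilon> + 1" unfolding q_def using e by (intro nat_ceil_le) simp
  have t1: "1 \<le> real t" unfolding t_def LI_def[symmetric] using le_nat_ceil[of LI] LI1 by linarith
  have tle: "real t \<le> 2 * LI" unfolding t_def LI_def[symmetric] using nat_ceil_le[of LI] LI1 by linarith
  have L1: "real (nat \<lceil>a\<rceil>) \<le> a + 1" using a1 by (intro nat_ceil_le) simp
  have qt1: "1 * 1 \<le> real q * real t" using q1 t1 by (intro mult_mono) auto
  then have h1: "real (q*t) + 1 \<le> 2 * real q * real t" by simp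
  have "log 2 (real (q*t) + 1) \<le> log 2 (2 * real q * real t)"
    using h1 by (intro log_le) auto
  also have "\<dots> = 1 + log 2 (real q) + log 2 (real t)"
    using q1 t1 by (simp add: log_mult)
  also have "log 2 (real q) \<le> c" unfolding c_def using q1 qle by (intro log_le) auto
  also have "log 2 (real t) \<le> log 2 (2 * LI)" using t1 tle by (intro log_le) auto
  also have "\<dots> = 1 + d" unfolding d_def LI_def[symmetric] using LI1 by (simp add: log_mult)
  finally have l2: "log 2 (real (q*t) + 1) \<le> 2 + c + d" by simp
  have L2: "real (nat \<lceil>log 2 (real (q*t) + 1)\<rceil>) \<le> 3 + c + d"
  proof -
    have l0: "0 \<le> log 2 (real (q*t) + 1)" using log_le[of 1 "real (q*t) + 1"] by simp
    show ?thesis using nat_ceil_le[OF l0] l2 by linarith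
  qed
  show ?thesis
  proof -
    have gen: "2 * x + 2 * y + 2 \<le> 12 * (a + d + c)" if "x \<le> a + 1" "y \<le> 3 + c + d" for x y :: real
      using that a1 c1 d0 by argo
    show ?thesis using gen[OF L1 L2] unfolding a_def d_def c_def by simp
  qed
qed




lemma reads_mono: "reads_at_most D \<sigma> k \<Longrightarrow> k \<le> k' \<Longrightarrow> reads_at_most D \<sigma> k'"
  unfolding reads_at_most_def by (meson order.trans)

lemma loglog_nonneg: "0 \<le> log 2 (log 2 (real x + 2))"
proof -
  have "1 \<le> log 2 (real x + 2)" by (rule log2_ge1) simp
  then show ?thesis using log_le[of 1 "log 2 (real x + 2)"] by simp
qed

lemma pow_aux: "real n ^ k + 2 \<le> (real n + 2) ^ (k+2)"
proof -
  have a: "real n ^ k \<le> (real n + 2) ^ k" by (rule power_mono) auto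
  have b: "1 \<le> (real n + 2) ^ k" by (rule one_le_power) simp
  have c: "4 \<le> (real n + 2) ^ 2"
  proof -
    have "2*2 \<le> (real n+2)*(real n+2)" by (intro mult_mono) auto
    then show ?thesis by (simp add: power2_eq_square)
  qed
  have "(real n + 2) ^ (k+2) = (real n + 2) ^ k * (real n + 2) ^ 2" by (rule power_add)
  also have "\<dots> \<ge> (real n + 2) ^ k * 4" using c b by (intro mult_left_mono) auto
  finally show ?thesis using a b by argo
qed

lemma poly_bound:
  fixes I :: "nat \<Rightarrow> nat"
  assumes A: "\<forall>n\<ge>N. real (I n) \<le> 2 powr (real n ^ k)"
  shows "\<exists>K\<ge>0. \<forall>n. log 2 (log 2 (real (I n) + 2)) \<le> K + real (k+2) * log 2 (real n + 2)"
proof (intro exI conjI allI)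
  define K where "K = (\<Sum>m<N. log 2 (log 2 (real (I m) + 2)))"
  show K0: "0 \<le> K" unfolding K_def by (intro sum_nonneg) (rule loglog_nonneg)
  fix n
  have pos: "0 \<le> real (k+2) * log 2 (real n + 2)"
    using log_le[of 1 "real n + 2"] by simp
  show "log 2 (log 2 (real (I n) + 2)) \<le> K + real (k+2) * log 2 (real n + 2)"
  proof (cases "n < N")
    case True
    have "log 2 (log 2 (real (I n) + 2)) \<le> K" unfolding K_def
      using True by (intro member_le_sum) (auto intro: loglog_nonneg)
    then show ?thesis using pos by linarith
  next
    case False
    then have In: "real (I n) \<le> 2 powr (real n ^ k)" using A by auto
    have p1: "1 \<le> 2 powr (real n ^ k)" by (rule ge_one_powr_ge_zero) auto
    have "real (I n) + 2 \<le> 2 powr (real n ^ k + 2)"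
      using In p1 by (simp add: powr_add)
    then have "log 2 (real (I n) + 2) \<le> log 2 (2 powr (real n ^ k + 2))" by (intro log_le) auto
    also have "\<dots> = real n ^ k + 2" by simp
    finally have l1: "log 2 (real (I n) + 2) \<le> real n ^ k + 2" .
    have g1: "1 \<le> log 2 (real (I n) + 2)" by (rule log2_ge1) simp
    have "log 2 (log 2 (real (I n) + 2)) \<le> log 2 (real n ^ k + 2)"
      using l1 g1 by (intro log_le) auto
    also have "\<dots> \<le> log 2 ((real n + 2) ^ (k+2))"
    proof (rule log_le)
      have "0 \<le> real n ^ k" by simp
      then show "0 < real n ^ k + 2" by linarith
    qed (rule pow_aux)
    also have "\<dots> = real (k+2) * log 2 (real n + 2)" by (subst log_nat_power) auto
    finally show ?thesis using K0 by linarith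
  qed
qed




lemma main:
  fixes V :: "'r list set" and cost :: "'r list \<Rightarrow> 'a list \<Rightarrow> real"
    and M :: "('r,'a) det_alg measure" and b I :: "nat \<Rightarrow> nat" and \<epsilon> :: real
  assumes R: "rand_alg_with_advice V M b"
    and meas: "\<forall>\<sigma>\<in>V. (\<lambda>D. alg_cost cost D \<sigma>) \<in> borel_measurable M"
    and IB: "inputs_bounded_by V I" and e: "\<epsilon> > 0"
  shows "\<exists>ALG::('r,'a) det_alg.
     (\<forall>\<sigma>\<in>V. ennreal (alg_cost cost ALG \<sigma>) \<le> ennreal (1 + \<epsilon>) * expected_cost cost M \<sigma>)
   \<and> (\<forall>\<sigma>\<in>V. reads_at_most ALG \<sigma>
        (real (b (length \<sigma>)) + 12 * (log 2 (real (length \<sigma>) + 2)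
           + log 2 (log 2 (real (I (length \<sigma>)) + 2)) + log 2 (1 / \<epsilon> + 2))))"
proof -
  have P: "prob_space M" and AC: "\<forall>D\<in>space M. advice_complexity_le V D (\<lambda>n. real (b n))"
    using R by (auto simp: rand_alg_with_advice_def)
  define p where "p = \<epsilon>/(1+\<epsilon>)"
  define Gs where "Gs \<sigma> = {D\<in>space M. ennreal (alg_cost cost D \<sigma>) \<le> ennreal (1+\<epsilon>) * expected_cost cost M \<sigma>}" for \<sigma>
  have Gprop: "Gs \<sigma> \<in> sets M \<and> p \<le> measure M (Gs \<sigma>)" if "\<sigma> \<in> V" for \<sigma>
    using good_prob[OF P meas[rule_format, OF that] e] unfolding Gs_def p_def expected_cost_def by blast
  define q where "q = nat \<lceil>1/\<epsilon>\<rceil>"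
  define t where "t n = nat \<lceil>log 2 (real (I n) + 2)\<rceil>" for n
  define h where "h n = q * t n" for n
  define S where "S n = {\<sigma>\<in>V. length \<sigma> = n}" for n
  have finS: "finite (S n)" and cardS: "card (S n) \<le> I n" for n
    using IB unfolding inputs_bounded_by_def S_def by auto
  have pe: "p = 1 - 1/(1+\<epsilon>)" unfolding p_def by (rule eps_frac[OF e])
  have p0: "0 < p" "p \<le> 1" using e unfolding p_def by auto
  have small: "(1-p)^(h n) * real (card (S n)) < 1" for n
  proof -
    have omp: "1 - p = 1/(1+\<epsilon>)" using pe by linarith
    have "1/\<epsilon> \<le> real q" unfolding q_def by (rule le_nat_ceil)
    then have q1: "1 \<le> real q * \<epsilon>" using e by (simp add: pos_divide_le_eq)
    have "1 + real q * \<epsilon> \<le> (1+\<epsilon>)^q" by (rule Bernoulli_inequality) (use e in simp)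
    then have b2: "2 \<le> (1+\<epsilon>)^q" using q1 by linarith
    have "real (I n) + 2 \<le> 2 ^ t n" unfolding t_def by (rule pow_ceil) simp
    also have "(2::real) ^ t n \<le> ((1+\<epsilon>)^q) ^ t n" by (rule power_mono[OF b2]) simp
    also have "\<dots> = (1+\<epsilon>)^(h n)" unfolding h_def by (simp add: power_mult)
    finally have lt: "real (card (S n)) < (1+\<epsilon>)^(h n)" using cardS[of n] by linarith
    have pos: "0 < (1+\<epsilon>)^(h n)" using e by simp
    have "(1-p)^(h n) * real (card (S n)) = real (card (S n)) / (1+\<epsilon>)^(h n)"
      unfolding omp by (simp add: power_one_over)
    also have "\<dots> < 1" using lt pos by simp
    finally show ?thesis .
  qed
  have "\<forall>n. \<exists>ds. set ds \<subseteq> space M \<and> length ds \<le> h n \<and> (\<forall>\<sigma>\<in>S n. \<exists>D\<in>set ds. D \<in> Gs \<sigma>)"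
  proof
    fix n
    have G': "\<And>s. s \<in> S n \<Longrightarrow> Gs s \<in> sets M \<and> p \<le> measure M (Gs s)"
      using Gprop unfolding S_def by blast
    show "\<exists>ds. set ds \<subseteq> space M \<and> length ds \<le> h n \<and> (\<forall>\<sigma>\<in>S n. \<exists>D\<in>set ds. D \<in> Gs \<sigma>)"
      by (rule cover[OF P finS G' p0 subset_refl small])
  qed
  from choice[OF this] obtain ds where ds: "\<forall>n. set (ds n) \<subseteq> space M \<and> length (ds n) \<le> h n
      \<and> (\<forall>\<sigma>\<in>S n. \<exists>D\<in>set (ds n). D \<in> Gs \<sigma>)" by blast
  define js where "js \<sigma> = (SOME j. j < length (ds (length \<sigma>)) \<and> ds (length \<sigma>) ! j \<in> Gs \<sigma>)" for \<sigma>
  have js: "js \<sigma> < length (ds (length \<sigma>)) \<and> ds (length \<sigma>) ! js \<sigma> \<in> Gs \<sigma>" if "\<sigma> \<in> V" for \<sigma>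
  proof -
    have "\<exists>D\<in>set (ds (length \<sigma>)). D \<in> Gs \<sigma>" using ds that unfolding S_def by blast
    then obtain D where D: "D \<in> set (ds (length \<sigma>))" "D \<in> Gs \<sigma>" by blast
    from D(1) obtain j where "j < length (ds (length \<sigma>))" "ds (length \<sigma>) ! j = D"
      by (auto simp: in_set_conv_nth)
    then have "\<exists>j. j < length (ds (length \<sigma>)) \<and> ds (length \<sigma>) ! j \<in> Gs \<sigma>" using D(2) by blast
    then show ?thesis unfolding js_def by (rule someI_ex)
  qed
  define L1 where "L1 n = nat \<lceil>log 2 (real n + 2)\<rceil>" for n :: nat
  define L2 where "L2 n = nat \<lceil>log 2 (real (h n) + 1)\<rceil>" for n
  define Dof where "Dof \<sigma> = ds (length \<sigma>) ! js \<sigma>" for \<sigma>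
  define A :: "(nat \<Rightarrow> bool) \<Rightarrow> 'r list \<Rightarrow> 'a"
    where "A \<phi> \<rho> = fst (ds (dN \<phi>) ! dJ \<phi>) (\<lambda>i. \<phi> (dH \<phi> + i)) \<rho>" for \<phi> \<rho>
  define Orc where "Orc \<sigma> = tape (length \<sigma>) (L1 (length \<sigma>)) (js \<sigma>) (L2 (length \<sigma>)) (snd (Dof \<sigma>) \<sigma>)" for \<sigma>
  define ALG :: "('r,'a) det_alg" where "ALG = (A, Orc)"
  have Dsp: "Dof \<sigma> \<in> space M" if "\<sigma> \<in> V" for \<sigma>
    using ds js[OF that] unfolding Dof_def by (meson nth_mem subsetD)
  have key: "run A \<psi> \<sigma> = alg_output (Dof \<sigma>) \<sigma>"
    if \<sigma>V: "\<sigma> \<in> V" and ag: "\<And>i. i < 2*L1 (length \<sigma>) + 2*L2 (length \<sigma>) + 2 + b (length \<sigma>) \<Longrightarrow> \<psi> i = Orc \<sigma> i"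
    for \<psi> \<sigma>
  proof -
    define n where "n = length \<sigma>"
    define H where "H = 2*L1 n + 2*L2 n + 2"
    have "real n + 2 \<le> 2 ^ L1 n" unfolding L1_def by (rule pow_ceil) simp
    then have "real n < 2 ^ L1 n" by linarith
    then have "real n < real (2 ^ L1 n)" by (simp only: of_nat_power of_nat_numeral)
    then have nL: "n < 2 ^ L1 n" by (simp only: of_nat_less_iff)
    have jh: "js \<sigma> < h n" using js[OF \<sigma>V] ds unfolding n_def by (meson order_less_le_trans)
    have "real (h n) + 1 \<le> 2 ^ L2 n" unfolding L2_def by (rule pow_ceil) simp
    moreover have "real (js \<sigma>) < real (h n)" using jh by simp
    ultimately have "real (js \<sigma>) < 2 ^ L2 n" by linarith
    then have "real (js \<sigma>) < real (2 ^ L2 n)" by (simp only: of_nat_power of_nat_numeral)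
    then have jL: "js \<sigma> < 2 ^ L2 n" by (simp only: of_nat_less_iff)
    have ag': "\<psi> i = tape n (L1 n) (js \<sigma>) (L2 n) (snd (Dof \<sigma>) \<sigma>) i" if "i < 2*L1 n + 2*L2 n + 2" for i
      using ag[of i] that unfolding Orc_def n_def by simp
    note dec = decode_tape[OF ag' nL jL]
    have runeq: "run A \<psi> \<sigma> = run (fst (Dof \<sigma>)) (\<lambda>i. \<psi> (H + i)) \<sigma>"
    proof -
      have d1: "dN \<psi> = length \<sigma>" using dec(1) unfolding n_def .
      have d2: "dJ \<psi> = js \<sigma>" using dec(2) .
      have d3: "dH \<psi> = H" using dec(3) unfolding H_def .
      show ?thesis unfolding run_def A_def d1 d2 d3 Dof_def ..
    qed
    have reads: "reads_at_most (Dof \<sigma>) \<sigma> (real (b n))"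
      using AC Dsp[OF \<sigma>V] unfolding advice_complexity_le_def n_def using \<sigma>V by blast
    have sh: "\<psi> (H + i) = snd (Dof \<sigma>) \<sigma> i" if "real (Suc i) \<le> real (b n)" for i
    proof -
      have "H + i < 2*L1 (length \<sigma>) + 2*L2 (length \<sigma>) + 2 + b (length \<sigma>)"
        using that unfolding H_def n_def by simp
      then have "\<psi> (H + i) = Orc \<sigma> (H + i)" by (rule ag)
      also have "\<dots> = snd (Dof \<sigma>) \<sigma> i" unfolding Orc_def H_def n_def by (rule tape_shift)
      finally show ?thesis .
    qed
    have RR: "\<forall>\<psi>'. (\<forall>i. real (Suc i) \<le> real (b n) \<longrightarrow> \<psi>' i = snd (Dof \<sigma>) \<sigma> i)
        \<longrightarrow> run (fst (Dof \<sigma>)) \<psi>' \<sigma> = alg_output (Dof \<sigma>) \<sigma>"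
      using reads unfolding reads_at_most_def .
    have R1: "(\<forall>i. real (Suc i) \<le> real (b n) \<longrightarrow> \<psi> (H + i) = snd (Dof \<sigma>) \<sigma> i)
        \<longrightarrow> run (fst (Dof \<sigma>)) (\<lambda>i. \<psi> (H + i)) \<sigma> = alg_output (Dof \<sigma>) \<sigma>"
      using spec[OF RR, of "\<lambda>i. \<psi> (H + i)"] by simp
    have R2: "\<forall>i. real (Suc i) \<le> real (b n) \<longrightarrow> \<psi> (H + i) = snd (Dof \<sigma>) \<sigma> i"
      using sh by blast
    have "run (fst (Dof \<sigma>)) (\<lambda>i. \<psi> (H + i)) \<sigma> = alg_output (Dof \<sigma>) \<sigma>"
      using mp[OF R1 R2] .
    then show ?thesis using runeq by simp
  qed
  have outp: "alg_output ALG \<sigma> = alg_output (Dof \<sigma>) \<sigma>" if "\<sigma> \<in> V" for \<sigma>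
    unfolding alg_output_def[of ALG] ALG_def using key[OF that, of "Orc \<sigma>"] by (simp add: alg_output_def)
  show ?thesis
  proof (intro exI[of _ ALG] conjI ballI)
    fix \<sigma> assume \<sigma>V: "\<sigma> \<in> V"
    have "Dof \<sigma> \<in> Gs \<sigma>" using js[OF \<sigma>V] unfolding Dof_def by blast
    then show "ennreal (alg_cost cost ALG \<sigma>) \<le> ennreal (1 + \<epsilon>) * expected_cost cost M \<sigma>"
      unfolding Gs_def alg_cost_def outp[OF \<sigma>V] by blast
  next
    fix \<sigma> assume \<sigma>V: "\<sigma> \<in> V"
    define n where "n = length \<sigma>"
    define X where "X = log 2 (real n + 2) + log 2 (log 2 (real (I n) + 2)) + log 2 (1 / \<epsilon> + 2)"
    have bud: "real (2*L1 n + 2*L2 n + 2) \<le> 12 * X"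
      unfolding X_def L1_def L2_def h_def t_def q_def using budget[OF e, of n "I n"] by simp
    show "reads_at_most ALG \<sigma> (real (b (length \<sigma>)) + 12 * (log 2 (real (length \<sigma>) + 2)
           + log 2 (log 2 (real (I (length \<sigma>)) + 2)) + log 2 (1 / \<epsilon> + 2)))"
      unfolding reads_at_most_def n_def[symmetric] X_def[symmetric]
    proof (intro allI impI)
      fix \<psi> assume agr: "\<forall>i. real (Suc i) \<le> real (b n) + 12 * X \<longrightarrow> \<psi> i = snd ALG \<sigma> i"
      have "\<psi> i = Orc \<sigma> i" if "i < 2*L1 (length \<sigma>) + 2*L2 (length \<sigma>) + 2 + b (length \<sigma>)" for i
      proof -
        have "real (Suc i) \<le> real (2*L1 n + 2*L2 n + 2 + b n)" using that unfolding n_def by simp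
        also have "\<dots> \<le> real (b n) + 12 * X" using bud by simp
        finally show ?thesis using agr unfolding ALG_def by simp
      qed
      then have "run A \<psi> \<sigma> = alg_output (Dof \<sigma>) \<sigma>" by (rule key[OF \<sigma>V])
      then show "run (fst ALG) \<psi> \<sigma> = alg_output ALG \<sigma>" using outp[OF \<sigma>V] unfolding ALG_def by simp
    qed
  qed
qed


theorem theorem16:
  shows
  "(\<exists>C::real. \<forall>(V::'r list set) (cost::'r list \<Rightarrow> 'a list \<Rightarrow> real)
        (M::('r,'a) det_alg measure) (b::nat \<Rightarrow> nat) (I::nat \<Rightarrow> nat) (\<epsilon>::real).
      online_min_problem V cost \<and> rand_alg_with_advice V M b
      \<and> (\<forall>\<sigma>\<in>V. (\<lambda>D. alg_cost cost D \<sigma>) \<in> borel_measurable M)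
      \<and> inputs_bounded_by V I \<and> \<epsilon> > 0 \<longrightarrow>
      (\<exists>ALG::('r,'a) det_alg.
         (\<forall>\<sigma>\<in>V. ennreal (alg_cost cost ALG \<sigma>) \<le> ennreal (1 + \<epsilon>) * expected_cost cost M \<sigma>)
       \<and> (\<forall>\<sigma>\<in>V. reads_at_most ALG \<sigma>
             (real (b (length \<sigma>)) + C * (log 2 (real (length \<sigma>) + 2)
                + log 2 (log 2 (real (I (length \<sigma>)) + 2)) + log 2 (1 / \<epsilon> + 2))))))
   \<and>
   (\<forall>(V::'r list set) (cost::'r list \<Rightarrow> 'a list \<Rightarrow> real)
        (M::('r,'a) det_alg measure) (b::nat \<Rightarrow> nat) (I::nat \<Rightarrow> nat) (\<epsilon>::real).
      online_min_problem V cost \<and> rand_alg_with_advice V M b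
      \<and> (\<forall>\<sigma>\<in>V. (\<lambda>D. alg_cost cost D \<sigma>) \<in> borel_measurable M)
      \<and> inputs_bounded_by V I \<and> \<epsilon> > 0
      \<and> (\<exists>k::nat. \<exists>N::nat. \<forall>n\<ge>N. real (I n) \<le> 2 powr (real n ^ k)) \<longrightarrow>
      (\<exists>ALG::('r,'a) det_alg.
         (\<forall>\<sigma>\<in>V. ennreal (alg_cost cost ALG \<sigma>) \<le> ennreal (1 + \<epsilon>) * expected_cost cost M \<sigma>)
       \<and> (\<exists>C::real. \<forall>\<sigma>\<in>V. reads_at_most ALG \<sigma>
             (real (b (length \<sigma>)) + C * log 2 (real (length \<sigma>) + 2)))))"
proof (rule conjI)
  show "\<exists>C::real. \<forall>(V::'r list set) (cost::'r list \<Rightarrow> 'a list \<Rightarrow> real)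
        (M::('r,'a) det_alg measure) (b::nat \<Rightarrow> nat) (I::nat \<Rightarrow> nat) (\<epsilon>::real).
      online_min_problem V cost \<and> rand_alg_with_advice V M b
      \<and> (\<forall>\<sigma>\<in>V. (\<lambda>D. alg_cost cost D \<sigma>) \<in> borel_measurable M)
      \<and> inputs_bounded_by V I \<and> \<epsilon> > 0 \<longrightarrow>
      (\<exists>ALG::('r,'a) det_alg.
         (\<forall>\<sigma>\<in>V. ennreal (alg_cost cost ALG \<sigma>) \<le> ennreal (1 + \<epsilon>) * expected_cost cost M \<sigma>)
       \<and> (\<forall>\<sigma>\<in>V. reads_at_most ALG \<sigma>
             (real (b (length \<sigma>)) + C * (log 2 (real (length \<sigma>) + 2)
                + log 2 (log 2 (real (I (length \<sigma>)) + 2)) + log 2 (1 / \<epsilon> + 2)))))"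
    by (intro exI[of _ 12] allI impI) (elim conjE, rule main, assumption+)
next
  show "\<forall>(V::'r list set) (cost::'r list \<Rightarrow> 'a list \<Rightarrow> real)
        (M::('r,'a) det_alg measure) (b::nat \<Rightarrow> nat) (I::nat \<Rightarrow> nat) (\<epsilon>::real).
      online_min_problem V cost \<and> rand_alg_with_advice V M b
      \<and> (\<forall>\<sigma>\<in>V. (\<lambda>D. alg_cost cost D \<sigma>) \<in> borel_measurable M)
      \<and> inputs_bounded_by V I \<and> \<epsilon> > 0
      \<and> (\<exists>k::nat. \<exists>N::nat. \<forall>n\<ge>N. real (I n) \<le> 2 powr (real n ^ k)) \<longrightarrow>
      (\<exists>ALG::('r,'a) det_alg.
         (\<forall>\<sigma>\<in>V. ennreal (alg_cost cost ALG \<sigma>) \<le> ennreal (1 + \<epsilon>) * expected_cost cost M \<sigma>)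
       \<and> (\<exists>C::real. \<forall>\<sigma>\<in>V. reads_at_most ALG \<sigma>
             (real (b (length \<sigma>)) + C * log 2 (real (length \<sigma>) + 2))))"
  proof (intro allI impI)
    fix V :: "'r list set" and cost :: "'r list \<Rightarrow> 'a list \<Rightarrow> real"
      and M :: "('r,'a) det_alg measure" and b I :: "nat \<Rightarrow> nat" and \<epsilon> :: real
    assume H: "online_min_problem V cost \<and> rand_alg_with_advice V M b
      \<and> (\<forall>\<sigma>\<in>V. (\<lambda>D. alg_cost cost D \<sigma>) \<in> borel_measurable M)
      \<and> inputs_bounded_by V I \<and> \<epsilon> > 0
      \<and> (\<exists>k::nat. \<exists>N::nat. \<forall>n\<ge>N. real (I n) \<le> 2 powr (real n ^ k))"
    then have R: "rand_alg_with_advice V M b" and me: "\<forall>\<sigma>\<in>V. (\<lambda>D. alg_cost cost D \<sigma>) \<in> borel_measurable M"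
      and IB: "inputs_bounded_by V I" and e: "\<epsilon> > 0"
      and ex: "\<exists>k::nat. \<exists>N::nat. \<forall>n\<ge>N. real (I n) \<le> 2 powr (real n ^ k)" by auto
    obtain k N where kN: "\<forall>n\<ge>N. real (I n) \<le> 2 powr (real n ^ k)" using ex by blast
    obtain K where K0: "0 \<le> K" and KB: "\<And>n. log 2 (log 2 (real (I n) + 2)) \<le> K + real (k+2) * log 2 (real n + 2)"
      using poly_bound[OF kN] by blast
    obtain ALG :: "('r,'a) det_alg" where A1: "\<forall>\<sigma>\<in>V. ennreal (alg_cost cost ALG \<sigma>) \<le> ennreal (1 + \<epsilon>) * expected_cost cost M \<sigma>"
      and A2: "\<forall>\<sigma>\<in>V. reads_at_most ALG \<sigma>
        (real (b (length \<sigma>)) + 12 * (log 2 (real (length \<sigma>) + 2)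
           + log 2 (log 2 (real (I (length \<sigma>)) + 2)) + log 2 (1 / \<epsilon> + 2)))"
      using main[OF R me IB e] by blast
    define c where "c = log 2 (1 / \<epsilon> + 2)"
    have c1: "1 \<le> c" unfolding c_def by (rule log2_ge1) (use e in simp)
    define C where "C = 12 * (1 + K + real (k+2) + c)"
    show "\<exists>ALG::('r,'a) det_alg.
         (\<forall>\<sigma>\<in>V. ennreal (alg_cost cost ALG \<sigma>) \<le> ennreal (1 + \<epsilon>) * expected_cost cost M \<sigma>)
       \<and> (\<exists>C::real. \<forall>\<sigma>\<in>V. reads_at_most ALG \<sigma>
             (real (b (length \<sigma>)) + C * log 2 (real (length \<sigma>) + 2)))"
    proof (intro exI[of _ ALG] conjI exI[of _ C] ballI)
      fix \<sigma> assume "\<sigma> \<in> V"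
      then show "ennreal (alg_cost cost ALG \<sigma>) \<le> ennreal (1 + \<epsilon>) * expected_cost cost M \<sigma>" using A1 by blast
    next
      fix \<sigma> assume \<sigma>V: "\<sigma> \<in> V"
      define a where "a = log 2 (real (length \<sigma>) + 2)"
      define d where "d = log 2 (log 2 (real (I (length \<sigma>)) + 2))"
      have a1: "1 \<le> a" unfolding a_def by (rule log2_ge1) simp
      have dK: "d \<le> K + real (k+2) * a" unfolding d_def a_def by (rule KB)
      have hK: "K * 1 \<le> K * a" using a1 K0 by (rule mult_left_mono)
      have hc: "c * 1 \<le> c * a" using a1 c1 by (intro mult_left_mono) auto
      have "12 * (a + d + c) \<le> C * a" unfolding C_def using dK hK hc
        by (simp add: algebra_simps)
      then have le: "real (b (length \<sigma>)) + 12 * (a + d + c) \<le> real (b (length \<sigma>)) + C * a" by simp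
      show "reads_at_most ALG \<sigma> (real (b (length \<sigma>)) + C * log 2 (real (length \<sigma>) + 2))"
        using reads_mono[OF A2[rule_format, OF \<sigma>V]] le unfolding a_def d_def c_def by blast
    qed
  qed
qed

end
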